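(* Consider the compound decision framework described in the context, with first selection rule $\mathbf s^1:\mathcal X\to\{0,1\}^m$, decision strategy $\tilde{\mathbf d}:\{0,1\}^m\times\mathcal X\to\mathcal D$ and selection strategy $\tilde{\mathbf s}:\mathcal D\times\mathcal X\to\{0,1\}^m$. Suppose (i) the composite selection is contracting: for every $\mathbf S\in\{0,1\}^m$, $\tilde{\mathbf s}(\tilde{\mathbf d}(\mathbf S,\mathbf X),\mathbf X)\preceq\mathbf S$ with probability 1; (ii) for all $t\ge1$ and all $\theta\in\Theta$, $r(\mathbf d^t,\mathbf s^t,\theta)\le q$. Then the decision rule $\mathbf d^T$ produced by the iteration controls the extra-selection risk at level $q$: for all $\theta\in\Theta$, $$r(\mathbf d^T,\mathbf s^{T+1},\theta)=\mathbb E_\theta\left[\frac{\sum_{i\in\mathcal S^{T+1}}\ell_i(D_i^T,\theta)}{1\vee|\mathcal S^{T+1}|}\right]\le q.$$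
   Context: Data $\mathbf X$ takes values in a space $\mathcal X$ with distribution $P_\theta$, $\theta\in\Theta$; $\mathbb E_\theta$ is expectation under $P_\theta$. There are $m$ tasks; task $i$ has a decision space $\mathcal D_i$ and loss $\ell_i:\mathcal D_i\times\Theta\to[0,1]$; $\mathcal D=\mathcal D_1\times\dots\times\mathcal D_m$. For a decision rule $\mathbf d:\mathcal X\to\mathcal D$ and selection rule $\mathbf s:\mathcal X\to\{0,1\}^m$, the selective risk is $r(\mathbf d,\mathbf s,\theta)=\mathbb E_\theta\big[\sum_{i=1}^m s_i(\mathbf X)\ell_i(d_i(\mathbf X),\theta)/(1\vee\sum_{i=1}^m s_i(\mathbf X))\big]$. For $\mathbf S,\mathbf S'\in\{0,1\}^m$, $\mathbf S\preceq\mathbf S'$ means $S_i\le S_i'$ for all $i$; the selected set of $\mathbf S$ is $\mathcal S=\{i:S_i=1\}$ and $|\mathcal S|=\sum_iS_i$. The iteration (Algorithm 1): $\mathbf S^1=\mathbf s^1(\mathbf X)$; for $t\ge1$, $\mathbf D^t=\tilde{\mathbf d}(\mathbf S^t,\mathbf X)$ and $\mathbf S^{t+1}=\tilde{\mathbf s}(\mathbf D^t,\mathbf X)$; $T$ is the first $t$ with $\mathbf S^{t+1}=\mathbf S^t$ (a random index). Cumulative rules: $\mathbf s^t(\mathbf X)=\mathbf S^t$ i.e. $\mathbf s^t=(\tilde{\mathbf s}\circ\tilde{\mathbf d})^{t-1}\circ\mathbf s^1$ where $(\tilde{\mathbf s}\circ\tilde{\mathbf d})(\mathbf S,\mathbf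 X)=\tilde{\mathbf s}(\tilde{\mathbf d}(\mathbf S,\mathbf X),\mathbf X)$, and $\mathbf d^t(\mathbf X)=\tilde{\mathbf d}(\mathbf s^t(\mathbf X),\mathbf X)=\mathbf D^t$. The rules $\mathbf d^T$ and $\mathbf s^{T+1}$ map $\mathbf X$ to $\mathbf D^{T}$ and $\mathbf S^{T+1}$ respectively. *)

theory Defs
  imports "HOL-Probability.Probability"
begin

text \<open>Tasks are indexed by a finite type 'i (m = CARD('i)); a selection vector
S in {0,1}^m is represented by its selected set (an 'i set); decisions are
functions 'i => 'd, with decision spaces Dsp i.\<close>

definition sel_risk ::
  "'x measure \<Rightarrow> ('i::finite \<Rightarrow> 'd \<Rightarrow> 'th \<Rightarrow> real) \<Rightarrow> 'th
   \<Rightarrow> ('x \<Rightarrow> 'i \<Rightarrow> 'd) \<Rightarrow> ('x \<Rightarrow> 'i set) \<Rightarrow> real" where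
  "sel_risk P l \<theta> d s =
     (\<integral>x. (\<Sum>i\<in>s x. l i (d x i) \<theta>) / max 1 (real (card (s x))) \<partial>P)"

definition cum_sel ::
  "('x \<Rightarrow> 'i set) \<Rightarrow> ('i set \<Rightarrow> 'x \<Rightarrow> 'i \<Rightarrow> 'd) \<Rightarrow> (('i \<Rightarrow> 'd) \<Rightarrow> 'x \<Rightarrow> 'i set)
   \<Rightarrow> nat \<Rightarrow> 'x \<Rightarrow> 'i set" where
  "cum_sel s1 dt st t x = ((\<lambda>S. st (dt S x) x) ^^ (t - 1)) (s1 x)"

definition cum_dec ::
  "('x \<Rightarrow> 'i set) \<Rightarrow> ('i set \<Rightarrow> 'x \<Rightarrow> 'i \<Rightarrow> 'd) \<Rightarrow> (('i \<Rightarrow> 'd) \<Rightarrow> 'x \<Rightarrow> 'i set)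
   \<Rightarrow> nat \<Rightarrow> 'x \<Rightarrow> 'i \<Rightarrow> 'd" where
  "cum_dec s1 dt st t x = dt (cum_sel s1 dt st t x) x"

definition stop_time ::
  "('x \<Rightarrow> 'i set) \<Rightarrow> ('i set \<Rightarrow> 'x \<Rightarrow> 'i \<Rightarrow> 'd) \<Rightarrow> (('i \<Rightarrow> 'd) \<Rightarrow> 'x \<Rightarrow> 'i set)
   \<Rightarrow> 'x \<Rightarrow> nat" where
  "stop_time s1 dt st x =
     (LEAST t. 1 \<le> t \<and> cum_sel s1 dt st (Suc t) x = cum_sel s1 dt st t x)"

end

theory Submission
  imports Defs
begin

lemma chain_fix:
  fixes F :: "'i::finite set \<Rightarrow> 'i set" and S0 :: "'i set"
  assumes dec: "\<And>S. F S \<subseteq> S"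
  shows "\<exists>t. 1 \<le> t \<and> t \<le> CARD('i) + 1 \<and> (F ^^ t) S0 = (F ^^ (t - 1)) S0"
proof (rule ccontr)
  assume nf: "\<not> ?thesis"
  have "card ((F ^^ n) S0) + n \<le> card S0" if "n \<le> CARD('i) + 1" for n
    using that
  proof (induction n)
    case 0 then show ?case by simp
  next
    case (Suc n)
    have ne: "(F ^^ Suc n) S0 \<noteq> (F ^^ n) S0" using nf Suc.prems by fastforce
    have "(F ^^ Suc n) S0 \<subset> (F ^^ n) S0" using ne dec by auto
    then have "card ((F ^^ Suc n) S0) < card ((F ^^ n) S0)"
      by (simp add: psubset_card_mono)
    with Suc show ?case by simp
  qed
  from this[of "CARD('i) + 1"] have "CARD('i) + 1 \<le> card S0" by simp
  moreover have "card S0 \<le> CARD('i)" by (simp add: card_mono)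
  ultimately show False by simp
qed

lemma fix_stays:
  fixes F :: "'a \<Rightarrow> 'a"
  assumes "(F ^^ Suc k) S0 = (F ^^ k) S0" "k \<le> n"
  shows "(F ^^ n) S0 = (F ^^ k) S0"
  using assms(2)
proof (induction n)
  case 0 then show ?case by simp
next
  case (Suc n)
  show ?case
  proof (cases "k = Suc n")
    case False
    then have "(F ^^ n) S0 = (F ^^ k) S0" using Suc by simp
    then have "(F ^^ Suc n) S0 = F ((F ^^ k) S0)" by simp
    also have "\<dots> = (F ^^ k) S0" using assms(1) by simp
    finally show ?thesis .
  qed simp
qed

theorem theorem1:
  fixes P :: "'th \<Rightarrow> 'x measure"
    and \<Theta> :: "'th set"
    and Dsp :: "'i::finite \<Rightarrow> 'd set"
    and l :: "'i \<Rightarrow> 'd \<Rightarrow> 'th \<Rightarrow> real"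
    and s1 :: "'x \<Rightarrow> 'i set"
    and dt :: "'i set \<Rightarrow> 'x \<Rightarrow> 'i \<Rightarrow> 'd"
    and st :: "('i \<Rightarrow> 'd) \<Rightarrow> 'x \<Rightarrow> 'i set"
    and q :: real
  assumes prob: "\<And>\<theta>. \<theta> \<in> \<Theta> \<Longrightarrow> prob_space (P \<theta>)"
    and loss_range: "\<And>i d \<theta>. d \<in> Dsp i \<Longrightarrow> \<theta> \<in> \<Theta> \<Longrightarrow> 0 \<le> l i d \<theta> \<and> l i d \<theta> \<le> 1"
    and dt_range: "\<And>S x i. dt S x i \<in> Dsp i"
    and meas_s1: "\<And>\<theta>. \<theta> \<in> \<Theta> \<Longrightarrow> s1 \<in> measurable (P \<theta>) (count_space UNIV)"
    and meas_comp: "\<And>\<theta> S. \<theta> \<in> \<Theta> \<Longrightarrow>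
                      (\<lambda>x. st (dt S x) x) \<in> measurable (P \<theta>) (count_space UNIV)"
    and meas_loss: "\<And>\<theta> S i. \<theta> \<in> \<Theta> \<Longrightarrow> (\<lambda>x. l i (dt S x i) \<theta>) \<in> borel_measurable (P \<theta>)"
    and contracting: "\<And>\<theta> S. \<theta> \<in> \<Theta> \<Longrightarrow> AE x in P \<theta>. st (dt S x) x \<subseteq> S"
    and risk_t: "\<And>t \<theta>. 1 \<le> t \<Longrightarrow> \<theta> \<in> \<Theta> \<Longrightarrow>
                   sel_risk (P \<theta>) l \<theta> (cum_dec s1 dt st t) (cum_sel s1 dt st t) \<le> q"
  shows "\<forall>\<theta>\<in>\<Theta>. sel_risk (P \<theta>) l \<theta>
            (\<lambda>x. cum_dec s1 dt st (stop_time s1 dt st x) x)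
            (\<lambda>x. cum_sel s1 dt st (Suc (stop_time s1 dt st x)) x) \<le> q"
proof
  fix \<theta> assume th: "\<theta> \<in> \<Theta>"
  define M where "M = P \<theta>"
  define F where "F x = (\<lambda>S. st (dt S x) x)" for x
  define it where "it n x = (F x ^^ n) (s1 x)" for n x
  have cs: "cum_sel s1 dt st t x = it (t - 1) x" for t x
    unfolding cum_sel_def it_def F_def by simp
  define T where "T x = stop_time s1 dt st x" for x
  have T_eq: "T x = (LEAST t. 1 \<le> t \<and> it t x = it (t - 1) x)" for x
    unfolding T_def stop_time_def cs by simp
  define G where "G A B x = (\<Sum>i\<in>B. l i (dt A x i) \<theta>) / max 1 (real (card B))" for A B x
  have Gm: "G A B \<in> borel_measurable M" for A B
    unfolding G_def M_def using meas_loss[OF th] by measurable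
  have itm: "it n \<in> measurable M (count_space UNIV)" for n
  proof (induction n)
    case 0 then show ?case using meas_s1[OF th] by (simp add: it_def M_def)
  next
    case (Suc n)
    have "(\<lambda>x. (\<lambda>S x. st (dt S x) x) (it n x) x) \<in> measurable M (count_space UNIV)"
      by (rule measurable_compose_countable[OF _ Suc, where f="\<lambda>S x. st (dt S x) x"]) (use meas_comp[OF th] M_def in auto)
    moreover have "it (Suc n) = (\<lambda>x. (\<lambda>S x. st (dt S x) x) (it n x) x)"
      by (auto simp: it_def F_def)
    ultimately show ?case by simp
  qed
  have predm: "(\<lambda>x. 1 \<le> t \<and> it t x = it (t - 1) x) \<in> measurable M (count_space UNIV)" for t
  proof -
    have "(\<lambda>x. (\<lambda>A x. 1 \<le> t \<and> A = it (t - 1) x) (it t x) x) \<in> measurable M (count_space UNIV)"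
    proof (rule measurable_compose_countable[OF _ itm, where f="\<lambda>A x. 1 \<le> t \<and> A = it (t - 1) x"])
      fix A
      have "(\<lambda>x. (\<lambda>B x. 1 \<le> t \<and> A = B) (it (t - 1) x) x) \<in> measurable M (count_space UNIV)"
        by (rule measurable_compose_countable[OF _ itm, where f="\<lambda>B x. 1 \<le> t \<and> A = B"]) (rule measurable_count_space_const)
      then show "(\<lambda>x. 1 \<le> t \<and> A = it (t - 1) x) \<in> measurable M (count_space UNIV)" .
    qed
    then show ?thesis .
  qed
  have Tm: "T \<in> measurable M (count_space UNIV)"
    unfolding T_eq by (rule measurable_Least[OF predm])
  define f where "f x = G (it (T x - 1) x) (it (T x) x) x" for x
  have fm: "f \<in> borel_measurable M"
  proof -
    have "(\<lambda>x. (\<lambda>n x. G (it (n - 1) x) (it n x) x) (T x) x) \<in> borel_measurable M"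
    proof (rule measurable_compose_countable[OF _ Tm, where f="\<lambda>n x. G (it (n - 1) x) (it n x) x"])
      fix n
      have "(\<lambda>x. (\<lambda>A x. G A (it n x) x) (it (n - 1) x) x) \<in> borel_measurable M"
      proof (rule measurable_compose_countable[OF _ itm, where f="\<lambda>A x. G A (it n x) x"])
        fix A
        show "(\<lambda>x. G A (it n x) x) \<in> borel_measurable M"
          by (rule measurable_compose_countable[OF _ itm, where f="\<lambda>B x. G A B x"]) (rule Gm)
      qed
      then show "(\<lambda>x. G (it (n - 1) x) (it n x) x) \<in> borel_measurable M" .
    qed
    then show ?thesis unfolding f_def .
  qed
  define N where "N = CARD('i) + 1"
  define g where "g x = G (it (N - 1) x) (it (N - 1) x) x" for x
  have gm: "g \<in> borel_measurable M"
  proof -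
    have "(\<lambda>x. (\<lambda>A x. G A A x) (it (N - 1) x) x) \<in> borel_measurable M"
      by (rule measurable_compose_countable[OF _ itm, where f="\<lambda>A x. G A A x"]) (rule Gm)
    then show ?thesis unfolding g_def .
  qed
  have AEall: "AE x in M. \<forall>S. F x S \<subseteq> S"
    unfolding AE_all_countable F_def M_def using contracting[OF th] by blast
  have AEeq: "AE x in M. f x = g x"
    using AEall
  proof eventually_elim
    case (elim x)
    obtain t where t: "1 \<le> t" "t \<le> N" "it t x = it (t - 1) x"
      using chain_fix[of "F x" "s1 x"] elim unfolding it_def N_def by blast
    have P1: "1 \<le> T x \<and> it (T x) x = it (T x - 1) x"
      unfolding T_eq by (rule LeastI[of _ t]) (use t in simp)
    have "T x \<le> t" unfolding T_eq by (rule Least_le) (use t in simp)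
    have fixk: "(F x ^^ Suc (T x - 1)) (s1 x) = (F x ^^ (T x - 1)) (s1 x)"
      using P1 unfolding it_def by simp
    have "it (N - 1) x = it (T x - 1) x"
      unfolding it_def by (rule fix_stays[OF fixk]) (use \<open>T x \<le> t\<close> t in simp)
    then show ?case unfolding f_def g_def using P1 by simp
  qed
  have "sel_risk (P \<theta>) l \<theta> (\<lambda>x. cum_dec s1 dt st (stop_time s1 dt st x) x)
            (\<lambda>x. cum_sel s1 dt st (Suc (stop_time s1 dt st x)) x) = integral\<^sup>L M f"
    unfolding sel_risk_def cum_dec_def f_def G_def M_def cs T_def by simp
  also have "\<dots> = integral\<^sup>L M g"
    by (rule integral_cong_AE[OF fm gm AEeq])
  also have "\<dots> = sel_risk (P \<theta>) l \<theta> (cum_dec s1 dt st N) (cum_sel s1 dt st N)"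
    unfolding sel_risk_def cum_dec_def g_def G_def M_def cs by simp
  also have "\<dots> \<le> q" by (rule risk_t[OF _ th]) (simp add: N_def)
  finally show "sel_risk (P \<theta>) l \<theta> (\<lambda>x. cum_dec s1 dt st (stop_time s1 dt st x) x)
            (\<lambda>x. cum_sel s1 dt st (Suc (stop_time s1 dt st x)) x) \<le> q" .
qed

end
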